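(* Let $G$ be a periodic group such that the set of primes dividing the orders of elements of $G$ is exactly $\{2,3\}$, for any two elements $g,h\in G$ of orders at most $4$ the order of $gh$ is at most $9$, and the centralizer of every involution of $G$ is a locally cyclic $2$-group. Let $a,b\in\Gamma_2(G)$. Then $(ab)^9=1$. In particular, $G$ has a single conjugacy class of involutions, and $\Gamma_2(G)=a^G=a^{\Gamma_2(G)}$.
   Context: For a positive integer $n$, $\Gamma_n(G)$ denotes the set of elements of $G$ of order exactly $n$. For $a\in G$ and a subset $X\subseteq G$, $a^X=\{x^{-1}ax \mid x\in X\}$. *)

theory Defs
  imports "HOL-Algebra.Algebra"
begin

definition centralizer_elem :: "('a, 'b) monoid_scheme \<Rightarrow> 'a \<Rightarrow> 'a set" where
  "centralizer_elem G x = {y \<in> carrier G. x \<otimes>\<^bsub>G\<^esub> y = y \<otimes>\<^bsub>G\<^esub> x}"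

(* G is periodic: every element has finite order (group.ord G x = 0 encodes infinite order) *)
definition periodic_group :: "('a, 'b) monoid_scheme \<Rightarrow> bool" where
  "periodic_group G \<longleftrightarrow> (\<forall>x \<in> carrier G. group.ord G x > 0)"

definition Gamma :: "('a, 'b) monoid_scheme \<Rightarrow> nat \<Rightarrow> 'a set" where
  "Gamma G n = {x \<in> carrier G. group.ord G x = n}"

definition conj_set :: "('a, 'b) monoid_scheme \<Rightarrow> 'a \<Rightarrow> 'a set \<Rightarrow> 'a set" where
  "conj_set G g S = {inv\<^bsub>G\<^esub> y \<otimes>\<^bsub>G\<^esub> g \<otimes>\<^bsub>G\<^esub> y | y. y \<in> S}"

definition locally_cyclic :: "('a, 'b) monoid_scheme \<Rightarrow> 'a set \<Rightarrow> bool" where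
  "locally_cyclic G H \<longleftrightarrow>
     (\<forall>F. F \<subseteq> H \<and> finite F \<longrightarrow> cyclic_group (subgroup_generated G F))"

definition is_2_group :: "('a, 'b) monoid_scheme \<Rightarrow> 'a set \<Rightarrow> bool" where
  "is_2_group G H \<longleftrightarrow> (\<forall>x \<in> H. \<exists>k::nat. group.ord G x = 2 ^ k)"

end

theory Submission
  imports Defs
begin

context group begin

lemma ord2I: "x \<in> carrier G \<Longrightarrow> x \<noteq> \<one> \<Longrightarrow> x \<otimes> x = \<one> \<Longrightarrow> ord x = 2"
proof -
  assume x: "x \<in> carrier G" "x \<noteq> \<one>" "x \<otimes> x = \<one>"
  have "x [^] (2::nat) = \<one>" using x by (simp add: numeral_2_eq_2)
  hence "ord x dvd 2" using x pow_eq_id by blast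
  moreover have "ord x \<noteq> 1" using x ord_eq_1 by blast
  moreover have "ord x \<le> 2" using \<open>ord x dvd 2\<close> by (rule dvd_imp_le) simp
  moreover have "ord x \<noteq> 0" using \<open>ord x dvd 2\<close> by (metis dvd_0_left_iff zero_neq_numeral)
  ultimately show ?thesis by linarith
qed

lemma ord2D: "x \<in> carrier G \<Longrightarrow> ord x = 2 \<Longrightarrow> x \<noteq> \<one> \<and> x \<otimes> x = \<one>"
proof -
  assume x: "x \<in> carrier G" "ord x = 2"
  have "x [^] (2::nat) = \<one>" using x pow_eq_id by simp
  hence "x \<otimes> x = \<one>" using x by (simp add: numeral_2_eq_2)
  moreover have "x \<noteq> \<one>" using x ord_eq_1 by force
  ultimately show ?thesis by blast
qed

lemma invol_inv: "x \<in> carrier G \<Longrightarrow> x \<otimes> x = \<one> \<Longrightarrow> inv x = x"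
  using inv_equality by blast

lemma unique_invol_cyclic:
  assumes F: "F \<subseteq> carrier G" and cyc: "cyclic_group (subgroup_generated G F)"
    and aF: "a \<in> F" and bF: "b \<in> F" and oa: "ord a = 2" and ob: "ord b = 2"
    and per: "\<forall>x\<in>carrier G. ord x > 0"
  shows "a = b"
proof -
  let ?H = "subgroup_generated G F"
  have gH: "group ?H" by (rule group_subgroup_generated)
  have sub: "carrier ?H \<subseteq> carrier G" by (rule carrier_subgroup_generated_subset)
  have aH: "a \<in> carrier ?H" and bH: "b \<in> carrier ?H"
    using F aF bF by (auto simp: carrier_subgroup_generated intro: generate.incl)
  obtain g where g: "g \<in> carrier ?H" and cg: "carrier ?H = range (\<lambda>n::int. g [^]\<^bsub>?H\<^esub> n)"
    using group.cyclic_group[OF gH] cyc by blast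
  have gG: "g \<in> carrier G" using g sub by blast
  have cg': "carrier ?H = range (\<lambda>n::int. g [^] n)" using cg int_pow_subgroup_generated[OF g] by simp
  obtain i::int where ai: "a = g [^] i" using aH cg' by auto
  obtain j::int where bj: "b = g [^] j" using bH cg' by auto
  define N where "N = int (ord g)"
  have aa: "a \<noteq> \<one> \<and> a \<otimes> a = \<one>" using ord2D aH sub oa by blast
  have bb: "b \<noteq> \<one> \<and> b \<otimes> b = \<one>" using ord2D bH sub ob by blast
  have "g [^] (i + i) = g [^] i \<otimes> g [^] i" using gG by (rule int_pow_mult)
  hence "g [^] (i + i) = \<one>" using aa ai by simp
  hence d1: "N dvd 2 * i" unfolding N_def using int_pow_eq_id[OF gG] by simp
  have "g [^] (j + j) = g [^] j \<otimes> g [^] j" using gG by (rule int_pow_mult)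
  hence "g [^] (j + j) = \<one>" using bb bj by simp
  hence d2: "N dvd 2 * j" unfolding N_def using int_pow_eq_id[OF gG] by simp
  have n1: "\<not> N dvd i" unfolding N_def using int_pow_eq_id[OF gG] aa ai by simp
  have n2: "\<not> N dvd j" unfolding N_def using int_pow_eq_id[OF gG] bb bj by simp
  obtain p where p: "2 * i = N * p" using d1 by blast
  obtain q where q: "2 * j = N * q" using d2 by blast
  have "odd p"
  proof
    assume "even p" then obtain p' where "p = 2 * p'" by blast
    hence "i = N * p'" using p by simp
    thus False using n1 by simp
  qed
  moreover have "odd q"
  proof
    assume "even q" then obtain q' where "q = 2 * q'" by blast
    hence "j = N * q'" using q by simp
    thus False using n2 by simp
  qed
  ultimately have "even (q - p)" by simp
  then obtain r where r: "q - p = 2 * r" by blast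
  have "2 * (j - i) = 2 * (N * r)" using p q r by (simp add: algebra_simps)
  hence "j - i = N * r" by simp
  hence "N dvd (j - i)" by simp
  thus ?thesis using ai bj int_pow_eq[OF gG] unfolding N_def by blast
qed


lemma conj_pow_gen:
  assumes a: "a \<in> carrier G" "a \<otimes> a = \<one>" and x: "x \<in> carrier G"
  shows "a \<otimes> x [^] (k::nat) \<otimes> a = (a \<otimes> x \<otimes> a) [^] k"
proof (induction k)
  case 0 thus ?case using a by simp
next
  case (Suc k)
  have aaz: "\<And>z. z \<in> carrier G \<Longrightarrow> a \<otimes> (a \<otimes> z) = z"
    using a by (simp add: m_assoc[symmetric])
  have "a \<otimes> x [^] Suc k \<otimes> a = (a \<otimes> x [^] k \<otimes> a) \<otimes> (a \<otimes> x \<otimes> a)"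
    using a x by (simp add: m_assoc aaz)
  thus ?case using Suc by simp
qed

lemma inv_prod_invol:
  assumes "c \<in> carrier G" "d \<in> carrier G" "c \<otimes> c = \<one>" "d \<otimes> d = \<one>"
  shows "inv (c \<otimes> d) = d \<otimes> c" and "c \<otimes> (c \<otimes> d) \<otimes> c = d \<otimes> c"
  using assms by (simp_all add: inv_mult_group invol_inv m_assoc[symmetric])

lemma conj_pow_invol:
  assumes "c \<in> carrier G" "d \<in> carrier G" "c \<otimes> c = \<one>" "d \<otimes> d = \<one>"
  shows "c \<otimes> (c \<otimes> d) [^] (k::nat) \<otimes> c = inv ((c \<otimes> d) [^] k)"
proof -
  have "c \<otimes> (c \<otimes> d) [^] k \<otimes> c = (c \<otimes> (c \<otimes> d) \<otimes> c) [^] k"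
    using assms by (intro conj_pow_gen) auto
  also have "\<dots> = (inv (c \<otimes> d)) [^] k" using inv_prod_invol[OF assms] by simp
  also have "\<dots> = inv ((c \<otimes> d) [^] k)" using assms by (simp add: nat_pow_inv)
  finally show ?thesis .
qed

lemma key_order:
  assumes per: "\<forall>x\<in>carrier G. ord x > 0"
    and spec: "\<And>x p. x \<in> carrier G \<Longrightarrow> Factorial_Ring.prime p \<Longrightarrow> p dvd ord x \<Longrightarrow> p = 2 \<or> p = 3"
    and ord_prod: "\<forall>g \<in> carrier G. \<forall>h \<in> carrier G.
                    ord g \<le> 4 \<longrightarrow> ord h \<le> 4 \<longrightarrow> ord (g \<otimes> h) \<le> 9"
    and cent: "\<And>t. t \<in> carrier G \<Longrightarrow> ord t = 2 \<Longrightarrow> subgroup (centralizer_elem G t) G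
                  \<and> locally_cyclic G (centralizer_elem G t)"
    and a: "a \<in> carrier G" "ord a = 2" and b: "b \<in> carrier G" "ord b = 2"
  shows "ord (a \<otimes> b) dvd 9"
proof -
  define c where "c = a \<otimes> b"
  define n where "n = ord c"
  have cG: "c \<in> carrier G" using a b c_def by simp
  have npos: "n > 0" using per cG n_def by blast
  have nle: "n \<le> 9" using ord_prod a b c_def n_def by simp
  have aa: "a \<noteq> \<one> \<and> a \<otimes> a = \<one>" using ord2D a by blast
  have bb: "b \<noteq> \<one> \<and> b \<otimes> b = \<one>" using ord2D b by blast
  have nodd: "odd n"
  proof
    assume "even n"
    then obtain m where m: "n = 2 * m" by blast
    have mpos: "m > 0" using m npos by simp
    define z where "z = c [^] m"
    have zG: "z \<in> carrier G" using z_def cG by simp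
    have cn: "c [^] n = \<one>" using cG n_def by simp
    have "z \<otimes> z = c [^] (m + m)" using z_def nat_pow_mult[OF cG, of m m] by simp
    also have "m + m = n" using m by simp
    finally have zz: "z \<otimes> z = \<one>" using cn by simp
    have z1: "z \<noteq> \<one>"
    proof
      assume "z = \<one>"
      hence "n dvd m" using z_def pow_eq_id cG n_def by simp
      thus False using m mpos by (simp add: nat_dvd_not_less)
    qed
    have oz: "ord z = 2" using ord2I zG z1 zz by blast
    have aza: "a \<otimes> z \<otimes> a = z"
      using conj_pow_invol[of a b m] a b aa bb z_def c_def invol_inv zG zz by simp
    have az: "a \<otimes> z = z \<otimes> a"
    proof -
      have "a \<otimes> z = a \<otimes> z \<otimes> (a \<otimes> a)" using aa a zG by simp
      also have "\<dots> = (a \<otimes> z \<otimes> a) \<otimes> a" using a zG by (simp add: m_assoc)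
      finally show ?thesis using aza by simp
    qed
    have cz: "c \<otimes> z = z \<otimes> c" using z_def cG nat_pow_Suc2[of c m] by simp
    have bac: "b = a \<otimes> c" using c_def a b aa by (simp add: m_assoc[symmetric])
    have bz: "b \<otimes> z = z \<otimes> b"
    proof -
      have "b \<otimes> z = a \<otimes> (c \<otimes> z)" using bac a cG zG by (simp add: m_assoc)
      also have "\<dots> = (a \<otimes> z) \<otimes> c" using cz a cG zG by (simp add: m_assoc)
      also have "\<dots> = z \<otimes> (a \<otimes> c)" using az a cG zG by (simp add: m_assoc)
      finally show ?thesis using bac by simp
    qed
    have sub: "{a, b} \<subseteq> centralizer_elem G z"
      using az bz a b unfolding centralizer_elem_def by auto
    have "cyclic_group (subgroup_generated G {a, b})"
      using cent[OF zG oz] sub unfolding locally_cyclic_def by blast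
    hence "a = b" using unique_invol_cyclic[of "{a,b}" a b] a b per by auto
    hence "c = \<one>" using c_def aa by simp
    hence "n = 1" using n_def by simp
    thus False using m by simp
  qed
  have n5: "n \<noteq> 5"
  proof
    assume "n = 5"
    hence "5 = (2::nat) \<or> 5 = (3::nat)" using spec[of c 5] cG n_def by simp
    thus False by simp
  qed
  have n7: "n \<noteq> 7"
  proof
    assume "n = 7"
    hence "7 = (2::nat) \<or> 7 = (3::nat)" using spec[of c 7] cG n_def by simp
    thus False by simp
  qed
  have "n = 1 \<or> n = 3 \<or> n = 9" using npos nle nodd n5 n7 by presburger
  thus ?thesis using n_def c_def by auto
qed

lemma conj_exists:
  assumes c: "c \<in> carrier G" "ord c = 2" and d: "d \<in> carrier G" "ord d = 2"
    and o: "ord (c \<otimes> d) dvd 9"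
  shows "\<exists>x \<in> carrier G. d = inv x \<otimes> c \<otimes> x \<and> c \<otimes> x \<otimes> c = inv x"
proof -
  define e where "e = c \<otimes> d"
  have eG: "e \<in> carrier G" using c d e_def by simp
  have cc: "c \<noteq> \<one> \<and> c \<otimes> c = \<one>" using ord2D c by blast
  have dd: "d \<noteq> \<one> \<and> d \<otimes> d = \<one>" using ord2D d by blast
  have "odd (ord e)" using o e_def by (metis dvd_trans even_iff_mod_2_eq_zero odd_numeral)
  then obtain m where m: "ord e = 2 * m + 1" by (metis oddE)
  define x where "x = e [^] (m + 1)"
  have xG: "x \<in> carrier G" using x_def eG by simp
  have cxc: "c \<otimes> x \<otimes> c = inv x"
    using conj_pow_invol[of c d "m+1"] c d cc dd x_def e_def by simp
  have cx: "c \<otimes> x = inv x \<otimes> c"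
  proof -
    have "c \<otimes> x = c \<otimes> x \<otimes> (c \<otimes> c)" using cc c xG by simp
    also have "\<dots> = (c \<otimes> x \<otimes> c) \<otimes> c" using c xG by (simp add: m_assoc)
    finally show ?thesis using cxc by simp
  qed
  have xx: "x \<otimes> x = e"
  proof -
    have "x \<otimes> x = e [^] (m + 1 + (m + 1))" using x_def nat_pow_mult[OF eG, of "m+1" "m+1"] by simp
    also have "m + 1 + (m + 1) = Suc (ord e)" using m by simp
    also have "e [^] Suc (ord e) = e [^] (ord e) \<otimes> e" by simp
    finally show ?thesis using eG by simp
  qed
  have "inv x \<otimes> c \<otimes> x = inv x \<otimes> (inv x \<otimes> c)" using cx xG c by (simp add: m_assoc)
  also have "\<dots> = inv (x \<otimes> x) \<otimes> c" using xG c by (simp add: m_assoc inv_mult_group)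
  also have "\<dots> = d \<otimes> c \<otimes> c" using xx e_def inv_prod_invol(1)[of c d] c d cc dd by simp
  also have "\<dots> = d" using d c cc by (simp add: m_assoc)
  finally show ?thesis using xG cxc by auto
qed

lemma conj_invol:
  assumes y: "y \<in> carrier G" and a: "a \<in> carrier G" "ord a = 2"
  shows "ord (inv y \<otimes> a \<otimes> y) = 2"
proof -
  have aa: "a \<noteq> \<one> \<and> a \<otimes> a = \<one>" using ord2D a by blast
  have aaz: "\<And>z. z \<in> carrier G \<Longrightarrow> a \<otimes> (a \<otimes> z) = z"
    using a aa by (simp add: m_assoc[symmetric])
  have yz: "\<And>z. z \<in> carrier G \<Longrightarrow> y \<otimes> (inv y \<otimes> z) = z"
    using y by (simp add: m_assoc[symmetric])
  have "(inv y \<otimes> a \<otimes> y) \<otimes> (inv y \<otimes> a \<otimes> y) = \<one>"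
    using y a aa by (simp add: m_assoc aaz yz)
  moreover have "inv y \<otimes> a \<otimes> y \<noteq> \<one>"
  proof
    assume "inv y \<otimes> a \<otimes> y = \<one>"
    hence "y \<otimes> (inv y \<otimes> a \<otimes> y) \<otimes> inv y = \<one>" using y by simp
    hence "a = \<one>" using y a by (simp add: m_assoc yz)
    thus False using aa by simp
  qed
  ultimately show ?thesis using ord2I y a by simp
qed

end

theorem lemma1:
  fixes G (structure) and a b
  assumes grp: "group G"
    and per: "periodic_group G"
    and spec: "{p::nat. Factorial_Ring.prime p \<and> (\<exists>x \<in> carrier G. p dvd group.ord G x)} = {2, 3}"
    and ord_prod: "\<forall>g \<in> carrier G. \<forall>h \<in> carrier G.
                    group.ord G g \<le> 4 \<longrightarrow> group.ord G h \<le> 4 \<longrightarrow> group.ord G (g \<otimes> h) \<le> 9"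
    and cent: "\<forall>t \<in> Gamma G 2. subgroup (centralizer_elem G t) G
                  \<and> locally_cyclic G (centralizer_elem G t) \<and> is_2_group G (centralizer_elem G t)"
    and a: "a \<in> Gamma G 2" and b: "b \<in> Gamma G 2"
  shows "(a \<otimes> b) [^] (9::nat) = \<one>
     \<and> (\<forall>c \<in> Gamma G 2. \<forall>d \<in> Gamma G 2. \<exists>x \<in> carrier G. d = inv x \<otimes> c \<otimes> x)
     \<and> Gamma G 2 = conj_set G a (carrier G)
     \<and> Gamma G 2 = conj_set G a (Gamma G 2)"
proof -
  interpret group G by (rule grp)
  have per': "\<forall>x\<in>carrier G. ord x > 0" using per unfolding periodic_group_def by blast
  have spec': "\<And>x p. x \<in> carrier G \<Longrightarrow> Factorial_Ring.prime p \<Longrightarrow> p dvd ord x \<Longrightarrow> p = 2 \<or> p = 3"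
  proof -
    fix x p assume "x \<in> carrier G" "Factorial_Ring.prime p" "p dvd ord x"
    hence "p \<in> {p::nat. Factorial_Ring.prime p \<and> (\<exists>x \<in> carrier G. p dvd group.ord G x)}" by blast
    thus "p = 2 \<or> p = 3" using spec by simp
  qed
  have cent': "\<And>t. t \<in> carrier G \<Longrightarrow> ord t = 2 \<Longrightarrow> subgroup (centralizer_elem G t) G
                  \<and> locally_cyclic G (centralizer_elem G t)"
    using cent unfolding Gamma_def by blast
  have K: "\<And>c d. c \<in> Gamma G 2 \<Longrightarrow> d \<in> Gamma G 2 \<Longrightarrow> ord (c \<otimes> d) dvd 9"
  proof -
    fix c d assume "c \<in> Gamma G 2" "d \<in> Gamma G 2"
    thus "ord (c \<otimes> d) dvd 9" unfolding Gamma_def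
      by (intro key_order[OF per' spec' ord_prod cent']) auto
  qed
  have C: "\<And>c d. c \<in> Gamma G 2 \<Longrightarrow> d \<in> Gamma G 2 \<Longrightarrow>
            \<exists>x \<in> carrier G. d = inv x \<otimes> c \<otimes> x \<and> c \<otimes> x \<otimes> c = inv x"
    using K conj_exists unfolding Gamma_def by blast
  have aG: "a \<in> carrier G" "ord a = 2" using a unfolding Gamma_def by auto
  have aa: "a \<noteq> \<one> \<and> a \<otimes> a = \<one>" using ord2D aG by blast
  have ainv: "inv a = a" using aa aG invol_inv by blast
  have P1: "(a \<otimes> b) [^] (9::nat) = \<one>"
    using K[OF a b] pow_eq_id a b unfolding Gamma_def by auto
  have P2: "\<forall>c \<in> Gamma G 2. \<forall>d \<in> Gamma G 2. \<exists>x \<in> carrier G. d = inv x \<otimes> c \<otimes> x"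
    using C by blast
  have sup: "conj_set G a S \<subseteq> Gamma G 2" if "S \<subseteq> carrier G" for S
    using that conj_invol[OF _ aG] aG unfolding conj_set_def Gamma_def by (auto dest: subsetD[OF that])
  have P3: "Gamma G 2 = conj_set G a (carrier G)"
  proof
    show "Gamma G 2 \<subseteq> conj_set G a (carrier G)"
      using C[OF a] unfolding conj_set_def by blast
  qed (rule sup, simp)
  have P4: "Gamma G 2 = conj_set G a (Gamma G 2)"
  proof
    show "Gamma G 2 \<subseteq> conj_set G a (Gamma G 2)"
    proof
      fix d assume d: "d \<in> Gamma G 2"
      show "d \<in> conj_set G a (Gamma G 2)"
      proof (cases "d = a")
        case True
        have "d = inv a \<otimes> a \<otimes> a" using True aG ainv aa by (simp add: m_assoc)
        thus ?thesis using a unfolding conj_set_def by blast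
      next
        case False
        obtain x where xG: "x \<in> carrier G" and dx: "d = inv x \<otimes> a \<otimes> x"
          and axa: "a \<otimes> x \<otimes> a = inv x" using C[OF a d] by blast
        define y where "y = a \<otimes> x"
        have yG: "y \<in> carrier G" using y_def aG xG by simp
        have "inv y \<otimes> a \<otimes> y = inv x \<otimes> (a \<otimes> (a \<otimes> (a \<otimes> x)))"
          using y_def aG xG ainv by (simp add: inv_mult_group m_assoc)
        also have "\<dots> = inv x \<otimes> a \<otimes> x" using aa aG xG by (simp add: m_assoc[symmetric])
        finally have dy: "d = inv y \<otimes> a \<otimes> y" using dx by simp
        have yy: "y \<otimes> y = \<one>"
        proof -
          have "y \<otimes> y = (a \<otimes> x \<otimes> a) \<otimes> x" using y_def aG xG by (simp add: m_assoc)
          thus ?thesis using axa xG by simp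
        qed
        have y1: "y \<noteq> \<one>"
        proof
          assume "y = \<one>"
          hence "x = inv a" using y_def aG xG by (metis inv_equality r_inv inv_closed)
          hence "x = a" using ainv by simp
          hence "d = a" using dx aG aa ainv by (simp add: m_assoc)
          thus False using False by simp
        qed
        have "y \<in> Gamma G 2" using ord2I[OF yG y1 yy] yG unfolding Gamma_def by simp
        thus ?thesis using dy unfolding conj_set_def by blast
      qed
    qed
  next
    show "conj_set G a (Gamma G 2) \<subseteq> Gamma G 2" by (rule sup) (auto simp: Gamma_def)
  qed
  show ?thesis using P1 P2 P3 P4 by blast
qed

end
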